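(* Consider the news-sharing game described in the context. For any finite number of agents $n$ and any parameters $q\in(1/2,1)$, integers $K\ge 1$, $1\le C\le K/2$, and $\lambda\in[0,1]$, there exists a symmetric Bayesian Nash equilibrium. Moreover, for any parameters $q,K,C,\lambda$ there exists a limit equilibrium.
   Context: Model: $n$ agents learn about a state $\omega\in\{-1,1\}$ with uniform common prior. Agent $i$ receives a private binary signal (story) $s_i\in\{-1,1\}$; signals are conditionally i.i.d. with $\mathbb{P}[s_i=\omega\mid\omega]=q$, $1/2<q<1$. Each posted story has a popularity score, starting at $1$ when posted and increasing by $1$ whenever it is shared. Fix a news-feed size $K\ge1$ and capacity $C\le K/2$. The first $K$ agents see no feed and just post their stories. Each agent $i\ge K+1$ sees a news feed of $K$ stories drawn independently with replacement from the $i-1$ predecessor stories: for each slot, with probability $\lambda$ (the virality weight) a story is drawn with probability proportional to current popularity scores, and otherwise uniformly at random. The agent sees only the realizations (not scores or times), shares exactly $C$ of the $K$ feed stories (each share adds 1 to that story's score), receiving utility $u>0$ per shared story equal to $\omega$, and posts own story $s_i$. Agents are uniformly randomly ordered and do not know their positions: an agent without a feed believes they are uniformly in positions $1,\dots,K$; an agent with a feed believes they are uniformly in positions $K+1,\dots,n$. Everything is common knowledge. A (mixed) strategy is $\sigma:\{-1,1\}\times\{0,\dots,K\}\to\Delta(\{0,\dots,C\})$, where $\sigma(s,k)$ is the distribution of the number of positive stories shared given own story $s$ and $k$ positive stories in the feed, supported in $[\max(0,C+k-K),\min(k,C)]$; strategies are viewed as points in a Euclidean space. $\sigma$ is state symmetric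 if $\sigma(s,k)(z)=\sigma(-s,K-k)(C-z)$ for all $s,k,z$. A symmetric BNE is a Bayesian Nash equilibrium in which all agents use the same state-symmetric strategy. A strategy $\sigma^*$ is a limit equilibrium (for fixed $q,K,C,\lambda$) if there are symmetric BNE $\sigma^{(j)}$ of games with $n_j\to\infty$ agents and the same $q,K,C,\lambda$ with $\sigma^{(j)}\to\sigma^*$. *)

theory Defs
  imports "HOL-Probability.Probability"
begin

text \<open>States and signals take values in {-1,1} (as int).
  A posted story is a pair (value, popularity score).  A strategy maps own
  signal s and number k of positive feed stories to a distribution over the
  number z of positive stories shared.\<close>

type_synonym strategy = "int \<Rightarrow> nat \<Rightarrow> nat pmf"
type_synonym story = "int \<times> nat"

definition signal_pmf :: "real \<Rightarrow> int \<Rightarrow> int pmf" where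
  "signal_pmf q \<omega> = map_pmf (\<lambda>b. if b then \<omega> else - \<omega>) (bernoulli_pmf q)"

definition slot_pmf :: "real \<Rightarrow> story list \<Rightarrow> nat pmf" where
  "slot_pmf lam st = do {
     b \<leftarrow> bernoulli_pmf lam;
     if b then pmf_of_multiset (\<Sum>j<length st. replicate_mset (snd (st ! j)) j)
     else pmf_of_set {..<length st} }"

definition feed_pmf :: "real \<Rightarrow> nat \<Rightarrow> story list \<Rightarrow> nat list pmf" where
  "feed_pmf lam K st = replicate_pmf K (slot_pmf lam st)"

definition feed_vals :: "story list \<Rightarrow> nat list \<Rightarrow> int list" where
  "feed_vals st idx = map (\<lambda>j. fst (st ! j)) idx"

definition num_pos :: "int list \<Rightarrow> nat" where
  "num_pos vs = length (filter (\<lambda>v. v = 1) vs)"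

definition share_pmf :: "int list \<Rightarrow> nat \<Rightarrow> nat \<Rightarrow> nat set pmf" where
  "share_pmf vs C z = do {
     A \<leftarrow> pmf_of_set {A. A \<subseteq> {p. p < length vs \<and> vs ! p = 1} \<and> card A = z};
     B \<leftarrow> pmf_of_set {B. B \<subseteq> {p. p < length vs \<and> vs ! p \<noteq> 1} \<and> card B = C - z};
     return_pmf (A \<union> B) }"

definition update_scores :: "story list \<Rightarrow> nat list \<Rightarrow> nat set \<Rightarrow> story list" where
  "update_scores st idx Sh =
     map (\<lambda>j. (fst (st ! j), snd (st ! j) + card {p \<in> Sh. p < length idx \<and> idx ! p = j}))
         [0..<length st]"

definition step_pmf :: "real \<Rightarrow> nat \<Rightarrow> nat \<Rightarrow> real \<Rightarrow> strategy \<Rightarrow> int \<Rightarrow> story list \<Rightarrow> story list pmf" where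
  "step_pmf q K C lam \<sigma> \<omega> st = do {
     idx \<leftarrow> feed_pmf lam K st;
     s \<leftarrow> signal_pmf q \<omega>;
     z \<leftarrow> \<sigma> s (num_pos (feed_vals st idx));
     Sh \<leftarrow> share_pmf (feed_vals st idx) C z;
     return_pmf (update_scores st idx Sh @ [(s, 1)]) }"

text \<open>Distribution of the posted stories (with scores) after the first m agents have acted,
  when all agents with a feed use strategy sigma and the state is omega.\<close>
fun hist_pmf :: "real \<Rightarrow> nat \<Rightarrow> nat \<Rightarrow> real \<Rightarrow> strategy \<Rightarrow> int \<Rightarrow> nat \<Rightarrow> story list pmf" where
  "hist_pmf q K C lam \<sigma> \<omega> 0 = return_pmf []"
| "hist_pmf q K C lam \<sigma> \<omega> (Suc m) = do {
     st \<leftarrow> hist_pmf q K C lam \<sigma> \<omega> m;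
     if m < K then map_pmf (\<lambda>s. st @ [(s, 1)]) (signal_pmf q \<omega>)
     else step_pmf q K C lam \<sigma> \<omega> st }"

text \<open>Observation (own signal, number of positive feed stories) of the agent in
  (1-indexed) position i >= K+1, given state omega.\<close>
definition obs_pmf :: "real \<Rightarrow> nat \<Rightarrow> nat \<Rightarrow> real \<Rightarrow> strategy \<Rightarrow> int \<Rightarrow> nat \<Rightarrow> (int \<times> nat) pmf" where
  "obs_pmf q K C lam \<sigma> \<omega> i = do {
     st \<leftarrow> hist_pmf q K C lam \<sigma> \<omega> (i - 1);
     idx \<leftarrow> feed_pmf lam K st;
     s \<leftarrow> signal_pmf q \<omega>;
     return_pmf (s, num_pos (feed_vals st idx)) }"

text \<open>Joint probability (from the viewpoint of an agent with a feed, who believes to be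
  uniformly in positions K+1..n) of state omega and observation (s,k).\<close>
definition joint_prob :: "nat \<Rightarrow> real \<Rightarrow> nat \<Rightarrow> nat \<Rightarrow> real \<Rightarrow> strategy \<Rightarrow> int \<Rightarrow> int \<Rightarrow> nat \<Rightarrow> real" where
  "joint_prob n q K C lam \<sigma> \<omega> s k =
     (1/2) * (1 / real (n - K)) * (\<Sum>i\<in>{K+1..n}. pmf (obs_pmf q K C lam \<sigma> \<omega> i) (s, k))"

definition share_utility :: "real \<Rightarrow> nat \<Rightarrow> int \<Rightarrow> nat \<Rightarrow> real" where
  "share_utility u C \<omega> z = u * (if \<omega> = 1 then real z else real (C - z))"

text \<open>(Joint-probability weighted) interim expected utility of the type (s,k) sharing z
  positive stories while everybody else uses sigma.\<close>
definition exp_util :: "nat \<Rightarrow> real \<Rightarrow> nat \<Rightarrow> nat \<Rightarrow> real \<Rightarrow> real \<Rightarrow> strategy \<Rightarrow> int \<Rightarrow> nat \<Rightarrow> nat \<Rightarrow> real" where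
  "exp_util n q K C lam u \<sigma> s k z =
     (\<Sum>\<omega>\<in>{-1, 1::int}. joint_prob n q K C lam \<sigma> \<omega> s k * share_utility u C \<omega> z)"

definition feasible :: "nat \<Rightarrow> nat \<Rightarrow> nat \<Rightarrow> nat set" where
  "feasible K C k = {C + k - K .. min k C}"

definition valid_strategy :: "nat \<Rightarrow> nat \<Rightarrow> strategy \<Rightarrow> bool" where
  "valid_strategy K C \<sigma> \<longleftrightarrow>
     (\<forall>s\<in>{-1, 1}. \<forall>k\<le>K. set_pmf (\<sigma> s k) \<subseteq> feasible K C k)"

definition state_symmetric :: "nat \<Rightarrow> nat \<Rightarrow> strategy \<Rightarrow> bool" where
  "state_symmetric K C \<sigma> \<longleftrightarrow>
     (\<forall>s\<in>{-1, 1}. \<forall>k\<le>K. \<forall>z\<le>C. pmf (\<sigma> s k) z = pmf (\<sigma> (- s) (K - k)) (C - z))"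

definition symmetric_BNE :: "nat \<Rightarrow> real \<Rightarrow> nat \<Rightarrow> nat \<Rightarrow> real \<Rightarrow> real \<Rightarrow> strategy \<Rightarrow> bool" where
  "symmetric_BNE n q K C lam u \<sigma> \<longleftrightarrow>
     valid_strategy K C \<sigma> \<and> state_symmetric K C \<sigma> \<and>
     (\<forall>s\<in>{-1, 1}. \<forall>k\<le>K. \<forall>z\<in>feasible K C k.
        (\<Sum>z'\<le>C. pmf (\<sigma> s k) z' * exp_util n q K C lam u \<sigma> s k z')
          \<ge> exp_util n q K C lam u \<sigma> s k z)"

definition limit_equilibrium :: "real \<Rightarrow> nat \<Rightarrow> nat \<Rightarrow> real \<Rightarrow> real \<Rightarrow> strategy \<Rightarrow> bool" where
  "limit_equilibrium q K C lam u \<sigma>' \<longleftrightarrow>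
     valid_strategy K C \<sigma>' \<and>
     (\<exists>ns :: nat \<Rightarrow> nat. \<exists>\<sigma>s :: nat \<Rightarrow> strategy.
        filterlim ns at_top sequentially \<and>
        (\<forall>j. symmetric_BNE (ns j) q K C lam u (\<sigma>s j)) \<and>
        (\<forall>s\<in>{-1, 1}. \<forall>k\<le>K. \<forall>z\<le>C. (\<lambda>j. pmf (\<sigma>s j s k) z) \<longlonglongrightarrow> pmf (\<sigma>' s k) z))"

end

theory Submission
  imports Defs "HOL-Homology.Homology"
begin

definition sqn :: "nat \<Rightarrow> (nat \<Rightarrow> real) \<Rightarrow> real" where
  "sqn N x = (\<Sum>i\<le>N. (x i)^2)"
definition Sph :: "nat \<Rightarrow> (nat \<Rightarrow> real) set" where
  "Sph N = {x. sqn N x = 1 \<and> (\<forall>i>N. x i = 0)}"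
definition Bal :: "nat \<Rightarrow> (nat \<Rightarrow> real) set" where
  "Bal N = {x. sqn N x \<le> 1 \<and> (\<forall>i>N. x i = 0)}"
definition nz :: "nat \<Rightarrow> (nat \<Rightarrow> real) \<Rightarrow> nat \<Rightarrow> real" where
  "nz N v = (\<lambda>i. v i / sqrt (sqn N v))"

lemma sqn_nonneg: "0 \<le> sqn N x"
  unfolding sqn_def by (auto intro: sum_nonneg)

lemma sqn_pos:
  assumes "\<forall>i>N. v i = 0" "v \<noteq> (\<lambda>i. 0)"
  shows "0 < sqn N v"
proof -
  obtain j where j: "v j \<noteq> 0" using assms(2) by auto
  then have jN: "j \<le> N" using assms(1) by (meson not_le)
  have "0 < (v j)^2" using j by simp
  also have "\<dots> \<le> sqn N v" unfolding sqn_def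
    by (rule member_le_sum) (use jN in auto)
  finally show ?thesis .
qed

lemma nz_Sph:
  assumes "\<forall>i>N. v i = 0" "v \<noteq> (\<lambda>i. 0)"
  shows "nz N v \<in> Sph N"
proof -
  have p: "0 < sqn N v" using sqn_pos[OF assms] .
  have sq: "(sqrt (sqn N v))^2 = sqn N v" using p by simp
  have "sqn N (nz N v) = (\<Sum>i\<le>N. (v i)^2 / (sqrt (sqn N v))^2)"
    unfolding nz_def by (simp add: sqn_def[of N "\<lambda>i. v i / sqrt (sqn N v)"] power_divide)
  also have "\<dots> = (\<Sum>i\<le>N. (v i)^2 / sqn N v)" by (simp only: sq)
  also have "\<dots> = (\<Sum>i\<le>N. (v i)^2) / sqn N v" by (rule sum_divide_distrib[symmetric])
  also have "\<dots> = sqn N v / sqn N v" by (simp only: sqn_def)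
  also have "\<dots> = 1" using p by simp
  finally show ?thesis unfolding Sph_def nz_def using assms(1) by auto
qed

lemma nz_Sph_id: "x \<in> Sph N \<Longrightarrow> nz N x = x"
  unfolding Sph_def nz_def by auto

lemma cont_sqn: "continuous_on S v \<Longrightarrow> continuous_on S (\<lambda>z. sqn N (v z))"
  unfolding sqn_def
  by (intro continuous_on_sum continuous_on_power continuous_on_product_then_coordinatewise[of S v])

lemma csndj: "continuous_on S (\<lambda>z::'a::topological_space \<times> (nat \<Rightarrow> real). snd z j)"
  by (rule continuous_on_product_then_coordinatewise, rule continuous_on_snd, rule continuous_on_id)

lemma cont_nz:
  assumes "continuous_on S v" "\<And>z. z \<in> S \<Longrightarrow> sqn N (v z) \<noteq> 0"
  shows "continuous_on S (\<lambda>z. nz N (v z))"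
  unfolding nz_def
proof (rule continuous_on_coordinatewise_then_product, rule continuous_on_divide)
  fix i show "continuous_on S (\<lambda>z. v z i)"
    using assms(1) by (rule continuous_on_product_then_coordinatewise)
  show "continuous_on S (\<lambda>z. sqrt (sqn N (v z)))"
    by (rule continuous_on_real_sqrt, rule cont_sqn, rule assms(1))
  show "\<forall>z\<in>S. sqrt (sqn N (v z)) \<noteq> 0" using assms(2) by simp
qed

lemma nsphere_eq: "nsphere N = top_of_set (Sph N)"
  by (simp add: nsphere euclidean_product_topology Sph_def sqn_def)

lemma sqn_scale: "sqn N (\<lambda>j. t * x j) = t^2 * sqn N x"
  unfolding sqn_def by (simp add: power_mult_distrib sum_distrib_left)

lemma brouwer_ball:
  assumes cont: "continuous_on (Bal N) f" and maps: "f ` Bal N \<subseteq> Bal N"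
  shows "\<exists>x\<in>Bal N. f x = x"
proof (rule ccontr)
  assume nf: "\<not> (\<exists>x\<in>Bal N. f x = x)"
  define v1 where "v1 = (\<lambda>z::real \<times> (nat \<Rightarrow> real). (\<lambda>i. fst z * snd z i - f (\<lambda>j. fst z * snd z j) i))"
  define v2 where "v2 = (\<lambda>z::real \<times> (nat \<Rightarrow> real). (\<lambda>i. snd z i - fst z * f (snd z) i))"
  let ?D = "{0..1::real} \<times> Sph N"
  have scB: "(\<lambda>j. t * x j) \<in> Bal N" if "t \<in> {0..1}" "x \<in> Sph N" for t x
  proof -
    have "t^2 \<le> 1" using that(1) by (simp add: power_le_one)
    then show ?thesis using that unfolding Bal_def Sph_def by (simp add: sqn_scale)
  qed
  have SB: "Sph N \<subseteq> Bal N" unfolding Sph_def Bal_def by auto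
  have fB: "f y \<in> Bal N" if "y \<in> Bal N" for y using maps that by auto
  have v1E: "\<forall>i>N. v1 z i = 0" if "z \<in> ?D" for z
    using that fB[OF scB[of "fst z" "snd z"]] unfolding v1_def Sph_def Bal_def by auto
  have v2E: "\<forall>i>N. v2 z i = 0" if "z \<in> ?D" for z
    using that fB[of "snd z"] SB unfolding v2_def Sph_def Bal_def by auto
  have v1nz: "v1 z \<noteq> (\<lambda>i. 0)" if "z \<in> ?D" for z
  proof
    assume "v1 z = (\<lambda>i. 0)"
    then have "f (\<lambda>j. fst z * snd z j) = (\<lambda>j. fst z * snd z j)"
      unfolding v1_def by (metis (no_types, lifting) eq_iff_diff_eq_0 ext)
    then show False using nf scB[of "fst z" "snd z"] that by auto
  qed
  have v2nz: "v2 z \<noteq> (\<lambda>i. 0)" if "z \<in> ?D" for z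
  proof
    assume "v2 z = (\<lambda>i. 0)"
    then have xe: "snd z = (\<lambda>j. fst z * f (snd z) j)"
      unfolding v2_def by (metis (no_types, lifting) eq_iff_diff_eq_0 ext)
    have x1: "sqn N (snd z) = 1" using that unfolding Sph_def by auto
    have fx: "sqn N (f (snd z)) \<le> 1" using fB[of "snd z"] SB that unfolding Bal_def by auto
    have t01: "0 \<le> fst z" "fst z \<le> 1" using that by auto
    have "1 = (fst z)^2 * sqn N (f (snd z))" using x1 xe sqn_scale by metis
    also have "\<dots> \<le> (fst z)^2" using fx t01 by (simp add: mult_left_le)
    moreover have "(fst z)^2 \<le> fst z" using t01 by (simp add: power2_eq_square mult_left_le_one_le)
    ultimately have "fst z = 1" using t01 by linarith
    then have "f (snd z) = snd z" using xe by simp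
    then show False using nf SB that by auto
  qed
  have cf: "continuous_on ?D (\<lambda>z. f (snd z))"
    by (rule continuous_on_compose2[OF cont continuous_on_snd]) (use SB in auto)
  have cf1: "continuous_on ?D (\<lambda>z. f (\<lambda>j. fst z * snd z j))"
  proof (rule continuous_on_compose2[OF cont])
    show "continuous_on ?D (\<lambda>z. (\<lambda>j. fst z * snd z j))"
      by (rule continuous_on_coordinatewise_then_product, intro continuous_on_mult continuous_on_fst continuous_on_id csndj)
    show "(\<lambda>z. (\<lambda>j. fst z * snd z j)) ` ?D \<subseteq> Bal N" using scB by auto
  qed
  have cv1: "continuous_on ?D v1" unfolding v1_def
    by (rule continuous_on_coordinatewise_then_product, intro continuous_on_diff continuous_on_mult continuous_on_fst continuous_on_id csndj
            continuous_on_product_then_coordinatewise[OF cf1])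
  have cv2: "continuous_on ?D v2" unfolding v2_def
    by (rule continuous_on_coordinatewise_then_product, intro continuous_on_diff continuous_on_mult continuous_on_fst continuous_on_id csndj
            continuous_on_product_then_coordinatewise[OF cf])
  define g where "g = (\<lambda>x. nz N (\<lambda>i. x i - f x i))"
  define a where "a = nz N (\<lambda>i. 0 - f (\<lambda>j. 0) i)"
  have H2: "homotopic_with_canon (\<lambda>x. True) (Sph N) (Sph N) id g"
  proof (subst homotopic_with, simp, intro exI conjI ballI)
    show "continuous_map (prod_topology (top_of_set {0..1}) (top_of_set (Sph N))) (top_of_set (Sph N)) (\<lambda>z. nz N (v2 z))"
    proof -
      have "continuous_on ?D (\<lambda>z. nz N (v2 z))"
        by (rule cont_nz[OF cv2]) (metis sqn_pos v2E v2nz less_irrefl)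
      moreover have "(\<lambda>z. nz N (v2 z)) ` ?D \<subseteq> Sph N" using nz_Sph v2E v2nz by auto
      ultimately show ?thesis by (simp add: continuous_map_subtopology_eu image_subset_iff_funcset)
    qed
  next
    fix x assume "x \<in> topspace (top_of_set (Sph N))"
    then show "nz N (v2 (0, x)) = id x" by (simp add: v2_def nz_Sph_id)
  next
    fix x show "nz N (v2 (1, x)) = g x" by (simp add: v2_def g_def)
  qed simp
  have H1: "homotopic_with_canon (\<lambda>x. True) (Sph N) (Sph N) (\<lambda>x. a) g"
  proof (subst homotopic_with, simp, intro exI conjI ballI)
    show "continuous_map (prod_topology (top_of_set {0..1}) (top_of_set (Sph N))) (top_of_set (Sph N)) (\<lambda>z. nz N (v1 z))"
    proof -
      have "continuous_on ?D (\<lambda>z. nz N (v1 z))"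
        by (rule cont_nz[OF cv1]) (metis sqn_pos v1E v1nz less_irrefl)
      moreover have "(\<lambda>z. nz N (v1 z)) ` ?D \<subseteq> Sph N" using nz_Sph v1E v1nz by auto
      ultimately show ?thesis by (simp add: continuous_map_subtopology_eu image_subset_iff_funcset)
    qed
  next
    fix x show "nz N (v1 (0, x)) = a" by (simp add: v1_def a_def)
  next
    fix x show "nz N (v1 (1, x)) = g x" by (simp add: v1_def g_def)
  qed simp
  have "homotopic_with_canon (\<lambda>x. True) (Sph N) (Sph N) id (\<lambda>x. a)"
    using homotopic_with_trans[OF H2 homotopic_with_symD[OF H1]] .
  then have "contractible (Sph N)" unfolding contractible_def by blast
  then have "contractible_space (nsphere N)" by (simp add: nsphere_eq)
  then show False using non_contractible_space_nsphere by blast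
qed
definition Qc :: "nat \<Rightarrow> (nat \<Rightarrow> real) set" where
  "Qc N = {x. (\<forall>i\<le>N. 0 \<le> x i \<and> x i \<le> 1) \<and> (\<forall>i>N. x i = 0)}"

lemma brouwer_cube:
  assumes cont: "continuous_on (Qc N) f" and maps: "f ` Qc N \<subseteq> Qc N"
  shows "\<exists>x\<in>Qc N. f x = x"
proof -
  define c where "c = real N + 1"
  have c1: "1 \<le> c" unfolding c_def by simp
  define cl where "cl = (\<lambda>y::nat\<Rightarrow>real. (\<lambda>i. if i \<le> N then max 0 (min 1 (c * y i)) else 0))"
  define g where "g = (\<lambda>y. (\<lambda>i. f (cl y) i / c))"
  have clQ: "cl y \<in> Qc N" for y unfolding cl_def Qc_def by auto
  have ccl: "continuous_on UNIV cl" unfolding cl_def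
  proof (rule continuous_on_coordinatewise_then_product)
    fix i show "continuous_on UNIV (\<lambda>x. if i \<le> N then max 0 (min 1 (c * x i)) else 0)"
      by (cases "i \<le> N") (simp_all add: continuous_on_max continuous_on_min continuous_on_mult continuous_on_const)
  qed
  have cfc: "continuous_on UNIV (\<lambda>y. f (cl y))"
    by (rule continuous_on_compose2[OF cont ccl]) (use clQ in auto)
  have cg: "continuous_on (Bal N) g" unfolding g_def
    by (rule continuous_on_coordinatewise_then_product, rule continuous_on_divide,
        rule continuous_on_subset[OF continuous_on_product_then_coordinatewise[OF cfc]]) (use c1 in auto)
  have gB: "g y \<in> Bal N" for y
  proof -
    have w: "f (cl y) \<in> Qc N" using maps clQ by auto
    have "sqn N (g y) = (\<Sum>i\<le>N. (f (cl y) i / c)^2)" unfolding sqn_def g_def by simp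
    also have "\<dots> \<le> (\<Sum>i\<le>N. 1 / c^2)"
    proof (rule sum_mono)
      fix i assume "i \<in> {..N}"
      then have "0 \<le> f (cl y) i" "f (cl y) i \<le> 1" using w unfolding Qc_def by auto
      then have "(f (cl y) i)^2 \<le> 1" by (simp add: power_le_one)
      then show "(f (cl y) i / c)^2 \<le> 1 / c^2" using c1 by (simp add: power_divide divide_right_mono)
    qed
    also have "\<dots> = c / c^2" unfolding c_def by simp
    also have "\<dots> \<le> 1" using c1 by (simp add: power2_eq_square)
    finally have "sqn N (g y) \<le> 1" .
    moreover have "\<forall>i>N. g y i = 0" using w unfolding g_def Qc_def by auto
    ultimately show ?thesis unfolding Bal_def by auto
  qed
  obtain y where y: "y \<in> Bal N" "g y = y"
    using brouwer_ball[OF cg] gB by blast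
  define x where "x = (\<lambda>i. c * y i)"
  have w: "f (cl y) \<in> Qc N" using maps clQ by auto
  have yi: "y i = f (cl y) i / c" for i using y(2) unfolding g_def by (metis)
  have clx: "cl y = x"
  proof
    fix i
    show "cl y i = x i"
    proof (cases "i \<le> N")
      case True
      then have "0 \<le> f (cl y) i" "f (cl y) i \<le> 1" using w unfolding Qc_def by auto
      moreover have "c * y i = f (cl y) i" using yi[of i] c1 by simp
      ultimately show ?thesis using True unfolding cl_def x_def by simp
    next
      case False
      then have "f (cl y) i = 0" using w unfolding Qc_def by auto
      then show ?thesis using False yi[of i] unfolding cl_def x_def by simp
    qed
  qed
  have "f x = x"
  proof
    fix i show "f x i = x i" using yi[of i] c1 clx unfolding x_def by simp
  qed
  moreover have "x \<in> Qc N" using clx clQ by metis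
  ultimately show ?thesis by blast
qed

definition flipv :: "int \<Rightarrow> int" where "flipv v = (if v = 1 then -1 else 1)"
definition flipst :: "story list \<Rightarrow> story list" where
  "flipst st = map (\<lambda>x. (flipv (fst x), snd x)) st"

lemma flipv_eq1[simp]: "flipv v = 1 \<longleftrightarrow> v \<noteq> 1" by (simp add: flipv_def)
lemma flipv_flipv: "v \<in> {-1,1} \<Longrightarrow> flipv (flipv v) = v" by (auto simp: flipv_def)

lemma slot_flip: "slot_pmf lam (flipst st) = slot_pmf lam st"
proof -
  have len: "length (flipst st) = length st" by (simp add: flipst_def)
  have "(\<Sum>j<length st. replicate_mset (snd (flipst st ! j)) j)
      = (\<Sum>j<length st. replicate_mset (snd (st ! j)) j)"
    by (rule sum.cong) (auto simp: flipst_def)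
  then show ?thesis by (simp only: slot_pmf_def len)
qed

lemma feed_flip: "feed_pmf lam K (flipst st) = feed_pmf lam K st"
  unfolding feed_pmf_def slot_flip ..

lemma num_pos_flip: "num_pos (map flipv vs) = length vs - num_pos vs"
proof -
  have "length (filter (\<lambda>v. v = 1) (map flipv vs)) = length (filter (\<lambda>v. v \<noteq> 1) vs)"
    by (simp add: o_def)
  moreover have "length (filter (\<lambda>v. v = 1) vs) + length (filter (\<lambda>v. \<not> v = 1) vs) = length vs"
    by (rule sum_length_filter_compl)
  ultimately show ?thesis unfolding num_pos_def by simp
qed

lemma feed_vals_flip: "set idx \<subseteq> {..<length st} \<Longrightarrow> feed_vals (flipst st) idx = map flipv (feed_vals st idx)"
  unfolding feed_vals_def flipst_def by auto

lemma share_flip: "z \<le> C \<Longrightarrow> share_pmf (map flipv vs) C (C - z) = share_pmf vs C z"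
proof -
  assume z: "z \<le> C"
  have e1: "{p. p < length (map flipv vs) \<and> map flipv vs ! p = 1} = {p. p < length vs \<and> vs ! p \<noteq> 1}" by auto
  have e2: "{p. p < length (map flipv vs) \<and> map flipv vs ! p \<noteq> 1} = {p. p < length vs \<and> vs ! p = 1}" by auto
  show ?thesis unfolding share_pmf_def e1 e2 using z
    by (subst bind_commute_pmf) (simp add: Un_commute)
qed

lemma update_flip: "update_scores (flipst st) idx Sh = flipst (update_scores st idx Sh)"
  unfolding update_scores_def flipst_def by auto

lemma signal_flip: "\<omega> \<in> {-1,1} \<Longrightarrow> signal_pmf q (flipv \<omega>) = map_pmf flipv (signal_pmf q \<omega>)"
  unfolding signal_pmf_def by (auto simp: pmf.map_comp o_def flipv_def intro!: map_pmf_cong)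

definition good_st :: "story list \<Rightarrow> bool" where
  "good_st st \<longleftrightarrow> st \<noteq> [] \<and> (\<forall>x\<in>set st. 1 \<le> snd x)"

lemma slot_set:
  assumes "good_st st"
  shows "set_pmf (slot_pmf lam st) \<subseteq> {..<length st}"
proof -
  define M where "M = (\<Sum>j<length st. replicate_mset (snd (st ! j)) j)"
  have l: "0 < length st" using assms unfolding good_st_def by simp
  have "1 \<le> snd (st ! 0)" using assms l unfolding good_st_def by (metis nth_mem)
  then have "0 \<in># replicate_mset (snd (st ! 0)) 0" by simp
  have sM: "set_mset M = (\<Union>j<length st. set_mset (replicate_mset (snd (st ! j)) j))"
    unfolding M_def by (simp add: set_mset_sum)
  have "0 \<in># M" unfolding sM using l \<open>1 \<le> snd (st ! 0)\<close>
    by (intro UN_I[of 0]) auto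
  then have Mne: "M \<noteq> {#}" by (metis empty_iff set_mset_empty)
  have sM2: "set_mset M \<subseteq> {..<length st}" unfolding sM
  proof (rule UN_least)
    fix j assume "j \<in> {..<length st}"
    then show "set_mset (replicate_mset (snd (st ! j)) j) \<subseteq> {..<length st}"
      by (cases "snd (st ! j) = 0") auto
  qed
  have "set_pmf (slot_pmf lam st) \<subseteq> set_mset M \<union> {..<length st}"
  proof -
    have ne: "set_pmf (pmf_of_set {..<length st}) = {..<length st}" by (rule set_pmf_of_set) (use l in auto)
    have gen: "set_pmf (bind_pmf P (\<lambda>b. if b then A else B)) \<subseteq> set_pmf A \<union> set_pmf B" for P and A B :: "nat pmf"
      by (auto split: if_splits)
    have nm: "set_pmf (pmf_of_multiset M) = set_mset M" using Mne by simp
    show ?thesis unfolding slot_pmf_def M_def[symmetric] using gen[of "bernoulli_pmf lam" "pmf_of_multiset M" "pmf_of_set {..<length st}"]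
      unfolding nm ne .
  qed
  then show ?thesis using sM2 by auto
qed

lemma feed_set:
  assumes "good_st st" "idx \<in> set_pmf (feed_pmf lam K st)"
  shows "length idx = K" "set idx \<subseteq> {..<length st}"
  using assms slot_set[OF assms(1), of lam] unfolding feed_pmf_def set_replicate_pmf by auto

lemma update_len[simp]: "length (update_scores st idx Sh) = length st"
  unfolding update_scores_def by simp

lemma update_good: "\<forall>x\<in>set st. 1 \<le> snd x \<Longrightarrow> \<forall>x\<in>set (update_scores st idx Sh). 1 \<le> snd x"
proof
  fix x assume a: "\<forall>x\<in>set st. 1 \<le> snd x" and "x \<in> set (update_scores st idx Sh)"
  then obtain j where j: "j < length st" and x: "x = (fst (st ! j), snd (st ! j) + card {p \<in> Sh. p < length idx \<and> idx ! p = j})"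
    unfolding update_scores_def by auto
  have "1 \<le> snd (st ! j)" using a j nth_mem by blast
  then show "1 \<le> snd x" using x by simp
qed

lemma hist_inv:
  "\<forall>st\<in>set_pmf (hist_pmf q K C lam \<sigma> \<omega> m). length st = m \<and> (\<forall>x\<in>set st. 1 \<le> snd x)"
proof (induction m)
  case 0 then show ?case by simp
next
  case (Suc m)
  show ?case
  proof
    fix st' assume st': "st' \<in> set_pmf (hist_pmf q K C lam \<sigma> \<omega> (Suc m))"
    then obtain st where st: "st \<in> set_pmf (hist_pmf q K C lam \<sigma> \<omega> m)"
      and st'2: "st' \<in> set_pmf (if m < K then map_pmf (\<lambda>s. st @ [(s, 1)]) (signal_pmf q \<omega>)
                                 else step_pmf q K C lam \<sigma> \<omega> st)" by auto
    have I: "length st = m" "\<forall>x\<in>set st. 1 \<le> snd x" using Suc.IH st by auto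
    show "length st' = Suc m \<and> (\<forall>x\<in>set st'. 1 \<le> snd x)"
    proof (cases "m < K")
      case True then show ?thesis using st'2 I by auto
    next
      case False
      then obtain idx s Sh where "st' = update_scores st idx Sh @ [(s,1)]"
        using st'2 unfolding step_pmf_def set_bind_pmf set_return_pmf by (simp split: if_splits) blast
      moreover have "\<forall>x\<in>set (update_scores st idx Sh). 1 \<le> snd x"
        using I(2) by (rule update_good)
      ultimately show ?thesis using I by auto
    qed
  qed
qed
definition symstrat :: "nat \<Rightarrow> nat \<Rightarrow> strategy \<Rightarrow> bool" where
  "symstrat K C \<sigma> \<longleftrightarrow> (\<forall>s k. k \<le> K \<longrightarrow> \<sigma> (flipv s) (K - k) = map_pmf (\<lambda>z. C - z) (\<sigma> s k)) \<and>
      (\<forall>s k. k \<le> K \<longrightarrow> set_pmf (\<sigma> s k) \<subseteq> {..C})"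

lemma flipst_append: "flipst (xs @ [(s, c)]) = flipst xs @ [(flipv s, c)]"
  by (simp add: flipst_def)

lemma num_pos_le: "num_pos vs \<le> length vs"
  unfolding num_pos_def by simp

lemma step_flip:
  assumes sym: "symstrat K C \<sigma>" and om: "\<omega> \<in> {-1,1}" and g: "good_st st"
  shows "step_pmf q K C lam \<sigma> (flipv \<omega>) (flipst st) = map_pmf flipst (step_pmf q K C lam \<sigma> \<omega> st)"
proof -
  have R: "map_pmf flipst (step_pmf q K C lam \<sigma> \<omega> st) = feed_pmf lam K st \<bind> (\<lambda>idx. signal_pmf q \<omega> \<bind>
     (\<lambda>s. \<sigma> s (num_pos (feed_vals st idx)) \<bind> (\<lambda>z. share_pmf (feed_vals st idx) C z \<bind>
     (\<lambda>Sh. return_pmf (flipst (update_scores st idx Sh @ [(s,1)]))))))"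
    unfolding step_pmf_def map_bind_pmf map_return_pmf ..
  have L: "step_pmf q K C lam \<sigma> (flipv \<omega>) (flipst st) = feed_pmf lam K st \<bind> (\<lambda>idx. signal_pmf q \<omega> \<bind>
     (\<lambda>s. \<sigma> s (num_pos (feed_vals st idx)) \<bind> (\<lambda>z. share_pmf (feed_vals st idx) C z \<bind>
     (\<lambda>Sh. return_pmf (flipst (update_scores st idx Sh @ [(s,1)]))))))"
    unfolding step_pmf_def feed_flip signal_flip[OF om] bind_map_pmf
  proof (rule bind_pmf_cong[OF refl])
    fix idx assume idx: "idx \<in> set_pmf (feed_pmf lam K st)"
    have len: "length idx = K" and sub: "set idx \<subseteq> {..<length st}" using feed_set[OF g idx] by auto
    have fv: "feed_vals (flipst st) idx = map flipv (feed_vals st idx)" by (rule feed_vals_flip[OF sub])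
    have lf: "length (feed_vals st idx) = K" using len by (simp add: feed_vals_def)
    have np: "num_pos (map flipv (feed_vals st idx)) = K - num_pos (feed_vals st idx)"
      using num_pos_flip lf by simp
    have kle: "num_pos (feed_vals st idx) \<le> K" using num_pos_le lf by metis
    show "signal_pmf q \<omega> \<bind> (\<lambda>x. \<sigma> (flipv x) (num_pos (feed_vals (flipst st) idx)) \<bind>
            (\<lambda>z. share_pmf (feed_vals (flipst st) idx) C z \<bind>
            (\<lambda>Sh. return_pmf (update_scores (flipst st) idx Sh @ [(flipv x, 1)])))) =
          signal_pmf q \<omega> \<bind> (\<lambda>s. \<sigma> s (num_pos (feed_vals st idx)) \<bind> (\<lambda>z. share_pmf (feed_vals st idx) C z \<bind>
            (\<lambda>Sh. return_pmf (flipst (update_scores st idx Sh @ [(s,1)])))))"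
      unfolding fv np
    proof (rule bind_pmf_cong[OF refl])
      fix s
      have sg: "\<sigma> (flipv s) (K - num_pos (feed_vals st idx)) = map_pmf (\<lambda>z. C - z) (\<sigma> s (num_pos (feed_vals st idx)))"
        using sym kle unfolding symstrat_def by blast
      show "\<sigma> (flipv s) (K - num_pos (feed_vals st idx)) \<bind>
            (\<lambda>z. share_pmf (map flipv (feed_vals st idx)) C z \<bind>
            (\<lambda>Sh. return_pmf (update_scores (flipst st) idx Sh @ [(flipv s, 1)]))) =
          \<sigma> s (num_pos (feed_vals st idx)) \<bind> (\<lambda>z. share_pmf (feed_vals st idx) C z \<bind>
            (\<lambda>Sh. return_pmf (flipst (update_scores st idx Sh @ [(s,1)]))))"
        unfolding sg bind_map_pmf
      proof (rule bind_pmf_cong[OF refl])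
        fix z assume "z \<in> set_pmf (\<sigma> s (num_pos (feed_vals st idx)))"
        then have "z \<le> C" using sym kle unfolding symstrat_def by blast
        then show "share_pmf (map flipv (feed_vals st idx)) C (C - z) \<bind>
            (\<lambda>Sh. return_pmf (update_scores (flipst st) idx Sh @ [(flipv s, 1)])) =
            share_pmf (feed_vals st idx) C z \<bind>
            (\<lambda>Sh. return_pmf (flipst (update_scores st idx Sh @ [(s,1)])))"
          by (simp add: share_flip update_flip flipst_append)
      qed
    qed
  qed
  show ?thesis using L R by simp
qed
lemma hist_flip:
  assumes sym: "symstrat K C \<sigma>" and om: "\<omega> \<in> {-1,1}" and K: "1 \<le> K"
  shows "map_pmf flipst (hist_pmf q K C lam \<sigma> \<omega> m) = hist_pmf q K C lam \<sigma> (flipv \<omega>) m"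
proof (induction m)
  case 0 then show ?case by (simp add: flipst_def)
next
  case (Suc m)
  have "hist_pmf q K C lam \<sigma> (flipv \<omega>) (Suc m) = hist_pmf q K C lam \<sigma> \<omega> m \<bind> (\<lambda>st.
      if m < K then map_pmf (\<lambda>s. flipst st @ [(s, 1)]) (signal_pmf q (flipv \<omega>))
      else step_pmf q K C lam \<sigma> (flipv \<omega>) (flipst st))"
    by (simp add: Suc.IH[symmetric] bind_map_pmf)
  also have "\<dots> = hist_pmf q K C lam \<sigma> \<omega> m \<bind> (\<lambda>st. map_pmf flipst (
      if m < K then map_pmf (\<lambda>s. st @ [(s, 1)]) (signal_pmf q \<omega>)
      else step_pmf q K C lam \<sigma> \<omega> st))"
  proof (rule bind_pmf_cong[OF refl])
    fix st assume st: "st \<in> set_pmf (hist_pmf q K C lam \<sigma> \<omega> m)"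
    show "(if m < K then map_pmf (\<lambda>s. flipst st @ [(s, 1)]) (signal_pmf q (flipv \<omega>))
      else step_pmf q K C lam \<sigma> (flipv \<omega>) (flipst st)) = map_pmf flipst (
      if m < K then map_pmf (\<lambda>s. st @ [(s, 1)]) (signal_pmf q \<omega>)
      else step_pmf q K C lam \<sigma> \<omega> st)"
    proof (cases "m < K")
      case True
      then show ?thesis by (simp add: signal_flip[OF om] pmf.map_comp o_def flipst_append)
    next
      case False
      have "length st = m" "\<forall>x\<in>set st. 1 \<le> snd x" using hist_inv st by blast+
      then have "good_st st" using False K unfolding good_st_def by auto
      then show ?thesis using False step_flip[OF sym om] by simp
    qed
  qed
  also have "\<dots> = map_pmf flipst (hist_pmf q K C lam \<sigma> \<omega> (Suc m))"
    by (simp add: map_bind_pmf)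
  finally show ?case by simp
qed

definition gd :: "(nat \<Rightarrow> real) set \<Rightarrow> ((nat \<Rightarrow> real) \<Rightarrow> 'a pmf) \<Rightarrow> bool" where
  "gd P M \<longleftrightarrow> (\<exists>S. finite S \<and> (\<forall>p\<in>P. set_pmf (M p) \<subseteq> S)) \<and> (\<forall>x. continuous_on P (\<lambda>p. pmf (M p) x))"

lemma gd_const: "finite (set_pmf M) \<Longrightarrow> gd P (\<lambda>_. M)"
  unfolding gd_def by (auto intro: continuous_on_const)

lemma gd_bind:
  assumes M: "gd P M" and f: "\<And>p y. p \<in> P \<Longrightarrow> y \<in> set_pmf (M p) \<Longrightarrow> gd P (\<lambda>p. f p y)"
  shows "gd P (\<lambda>p. bind_pmf (M p) (f p))"
proof -
  obtain S where S: "finite S" "\<forall>p\<in>P. set_pmf (M p) \<subseteq> S" using M unfolding gd_def by blast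
  define S0 where "S0 = (\<Union>p\<in>P. set_pmf (M p))"
  have S0: "finite S0" using S unfolding S0_def by (meson UN_least finite_subset)
  have fy: "gd P (\<lambda>p. f p y)" if "y \<in> S0" for y using that f unfolding S0_def by blast
  have "\<forall>y\<in>S0. \<exists>T. finite T \<and> (\<forall>p\<in>P. set_pmf (f p y) \<subseteq> T)" using fy unfolding gd_def by blast
  then obtain T where T: "\<And>y. y \<in> S0 \<Longrightarrow> finite (T y) \<and> (\<forall>p\<in>P. set_pmf (f p y) \<subseteq> T y)" by metis
  have eq: "pmf (bind_pmf (M p) (f p)) x = (\<Sum>y\<in>S0. pmf (M p) y * pmf (f p y) x)" if "p \<in> P" for p x
  proof -
    have "pmf (bind_pmf (M p) (f p)) x = (\<integral>y. pmf (f p y) x \<partial>measure_pmf (M p))" by (rule pmf_bind)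
    also have "\<dots> = (\<Sum>y\<in>S0. pmf (M p) y *\<^sub>R pmf (f p y) x)"
      by (rule integral_measure_pmf[OF S0]) (use that in \<open>auto simp: S0_def\<close>)
    finally show ?thesis by simp
  qed
  have c: "continuous_on P (\<lambda>p. pmf (bind_pmf (M p) (f p)) x)" for x
  proof -
    have "continuous_on P (\<lambda>p. \<Sum>y\<in>S0. pmf (M p) y * pmf (f p y) x)"
      using M fy unfolding gd_def by (intro continuous_on_sum continuous_on_mult) auto
    then show ?thesis using eq by (subst continuous_on_cong[OF refl]) auto
  qed
  have "\<forall>p\<in>P. set_pmf (bind_pmf (M p) (f p)) \<subseteq> (\<Union>y\<in>S0. T y)"
    using T unfolding S0_def by fastforce
  moreover have "finite (\<Union>y\<in>S0. T y)" using S0 T by auto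
  ultimately show ?thesis using c unfolding gd_def by blast
qed

lemma gd_map: "gd P M \<Longrightarrow> gd P (\<lambda>p. map_pmf g (M p))"
  unfolding map_pmf_def by (rule gd_bind) (auto intro: gd_const)

lemma fin_bind: "finite (set_pmf M) \<Longrightarrow> (\<And>y. y \<in> set_pmf M \<Longrightarrow> finite (set_pmf (f y))) \<Longrightarrow> finite (set_pmf (bind_pmf M f))"
  by simp

lemma gd_bern: "gd (Qc K) (\<lambda>p. bernoulli_pmf (p k))"
proof -
  have pk: "0 \<le> p k \<and> p k \<le> 1" if "p \<in> Qc K" for p using that unfolding Qc_def by (cases "k \<le> K") auto
  have ck: "continuous_on (Qc K) (\<lambda>p. p k)"
    by (rule continuous_on_subset[OF continuous_on_product_coordinates]) auto
  have "continuous_on (Qc K) (\<lambda>p. pmf (bernoulli_pmf (p k)) b)" for b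
  proof (cases b)
    case True
    then show ?thesis using ck pk by (subst continuous_on_cong[OF refl]) auto
  next
    case False
    have "continuous_on (Qc K) (\<lambda>p. 1 - p k)" by (intro continuous_on_diff continuous_on_const ck)
    then show ?thesis using pk False by (subst continuous_on_cong[OF refl]) auto
  qed
  then show ?thesis unfolding gd_def by (intro conjI exI[of _ UNIV]) auto
qed

definition sig1 :: "nat \<Rightarrow> nat \<Rightarrow> (nat \<Rightarrow> real) \<Rightarrow> nat \<Rightarrow> nat pmf" where
  "sig1 K C p k = map_pmf (\<lambda>b. if b then min k C else C + k - K) (bernoulli_pmf (p k))"

definition sigp :: "nat \<Rightarrow> nat \<Rightarrow> (nat \<Rightarrow> real) \<Rightarrow> strategy" where
  "sigp K C p = (\<lambda>s k. if s = 1 then sig1 K C p k else map_pmf (\<lambda>z. C - z) (sig1 K C p (K - k)))"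

lemma sig1_set: "set_pmf (sig1 K C p k) \<subseteq> {C + k - K, min k C}"
  unfolding sig1_def by auto

lemma gd_sig1: "gd (Qc K) (\<lambda>p. sig1 K C p k)"
  unfolding sig1_def by (rule gd_map[OF gd_bern])

lemma gd_sigp: "gd (Qc K) (\<lambda>p. sigp K C p s k)"
  unfolding sigp_def by (cases "s = 1") (simp_all add: gd_sig1 gd_map)

lemma sigp_feas:
  assumes "k \<le> K" "C \<le> K" "z \<in> set_pmf (sigp K C p s k)"
  shows "C + k - K \<le> z \<and> z \<le> min k C"
proof (cases "s = 1")
  case True
  then have "z \<in> {C + k - K, min k C}" using assms sig1_set[of K C p k] unfolding sigp_def by auto
  then show ?thesis using assms by auto
next
  case False
  then obtain y where "y \<in> set_pmf (sig1 K C p (K - k))" "z = C - y"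
    using assms unfolding sigp_def by auto
  moreover have "y \<in> {C + (K - k) - K, min (K - k) C}" using sig1_set[of K C p "K - k"] calculation by blast
  ultimately show ?thesis using assms by auto
qed

lemma sigp_le: "C \<le> K \<Longrightarrow> k \<le> K \<Longrightarrow> set_pmf (sigp K C p s k) \<subseteq> {..C}"
proof -
  assume C: "C \<le> K" and k: "k \<le> K"
  have "set_pmf (sig1 K C p k') \<subseteq> {..C}" if "k' \<le> K" for k' using sig1_set[of K C p k'] that by fastforce
  then show ?thesis unfolding sigp_def using k by (auto split: if_splits)
qed

lemma sigp_symstrat: "C \<le> K \<Longrightarrow> symstrat K C (sigp K C p)"
  unfolding symstrat_def
proof (intro conjI allI impI)
  fix s k assume C: "C \<le> K" and k: "k \<le> K"
  show "sigp K C p (flipv s) (K - k) = map_pmf (\<lambda>z. C - z) (sigp K C p s k)"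
  proof (cases "s = 1")
    case True
    then show ?thesis using k by (simp add: sigp_def flipv_def)
  next
    case False
    have "map_pmf (\<lambda>z. C - z) (map_pmf (\<lambda>z. C - z) (sig1 K C p (K - k))) = map_pmf id (sig1 K C p (K - k))"
      unfolding pmf.map_comp by (rule map_pmf_cong) (use sig1_set[of K C p "K - k"] in auto)
    then show ?thesis using False by (simp add: sigp_def flipv_def)
  qed
next
  fix s k assume "C \<le> K" "k \<le> K" then show "set_pmf (sigp K C p s k) \<subseteq> {..C}" by (rule sigp_le)
qed
lemma pmf_of_set_subsets_fin:
  assumes "finite S" "n \<le> card S"
  shows "set_pmf (pmf_of_set {A. A \<subseteq> S \<and> card A = n}) = {A. A \<subseteq> S \<and> card A = n}"
    "finite {A. A \<subseteq> S \<and> card A = n}"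
proof -
  have fin: "finite {A. A \<subseteq> S \<and> card A = n}"
    by (rule finite_subset[of _ "Pow S"]) (use assms in auto)
  obtain T where "T \<subseteq> S" "card T = n" using obtain_subset_with_card_n[OF assms(2)] by metis
  then have ne: "{A. A \<subseteq> S \<and> card A = n} \<noteq> {}" by auto
  show "set_pmf (pmf_of_set {A. A \<subseteq> S \<and> card A = n}) = {A. A \<subseteq> S \<and> card A = n}"
    using fin ne by simp
  show "finite {A. A \<subseteq> S \<and> card A = n}" by (rule fin)
qed

lemma card_pos: "card {p. p < length vs \<and> vs ! p = 1} = num_pos vs"
  unfolding num_pos_def by (simp add: length_filter_conv_card)

lemma card_neg: "card {p. p < length vs \<and> vs ! p \<noteq> 1} = length vs - num_pos vs"
proof -
  have "{p. p < length vs \<and> vs ! p \<noteq> 1} = {p. p < length (map flipv vs) \<and> map flipv vs ! p = 1}" by auto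
  then show ?thesis using card_pos[of "map flipv vs"] num_pos_flip by simp
qed

lemma share_fin:
  assumes "z \<le> num_pos vs" "C - z \<le> length vs - num_pos vs"
  shows "finite (set_pmf (share_pmf vs C z))"
proof -
  let ?P = "{p. p < length vs \<and> vs ! p = 1}"
  let ?N = "{p. p < length vs \<and> vs ! p \<noteq> 1}"
  have f1: "finite ?P" "finite ?N" by auto
  note A = pmf_of_set_subsets_fin[OF f1(1), of z] 
  note B = pmf_of_set_subsets_fin[OF f1(2), of "C - z"]
  have "set_pmf (share_pmf vs C z) = (\<Union>A\<in>{A. A \<subseteq> ?P \<and> card A = z}. \<Union>B\<in>{B. B \<subseteq> ?N \<and> card B = C - z}. {A \<union> B})"
    unfolding share_pmf_def using A B assms card_pos card_neg by simp
  then show ?thesis using A B assms card_pos card_neg by simp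
qed
lemma feed_fin: "good_st st \<Longrightarrow> finite (set_pmf (feed_pmf lam K st))"
proof -
  assume g: "good_st st"
  have "set_pmf (feed_pmf lam K st) \<subseteq> {xs. set xs \<subseteq> {..<length st} \<and> length xs = K}"
    using feed_set[OF g] by blast
  moreover have "finite {xs. set xs \<subseteq> {..<length st} \<and> length xs = K}"
    by (rule finite_lists_length_eq) simp
  ultimately show ?thesis by (rule finite_subset)
qed

lemma signal_fin: "finite (set_pmf (signal_pmf q \<omega>))"
  unfolding signal_pmf_def by simp

lemma gd_step:
  assumes C: "C \<le> K" and g: "good_st st"
  shows "gd (Qc K) (\<lambda>p. step_pmf q K C lam (sigp K C p) \<omega> st)"
  unfolding step_pmf_def
proof (rule gd_bind[OF gd_const[OF feed_fin[OF g]]])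
  fix p idx assume idx: "idx \<in> set_pmf (feed_pmf lam K st)"
  have len: "length (feed_vals st idx) = K" using feed_set(1)[OF g idx] by (simp add: feed_vals_def)
  let ?k = "num_pos (feed_vals st idx)"
  have kle: "?k \<le> K" using num_pos_le len by metis
  show "gd (Qc K) (\<lambda>p. signal_pmf q \<omega> \<bind> (\<lambda>s. sigp K C p s ?k \<bind>
           (\<lambda>z. share_pmf (feed_vals st idx) C z \<bind> (\<lambda>Sh. return_pmf (update_scores st idx Sh @ [(s, 1)])))))"
  proof (rule gd_bind[OF gd_const[OF signal_fin]])
    fix p' s
    show "gd (Qc K) (\<lambda>p. sigp K C p s ?k \<bind>
           (\<lambda>z. share_pmf (feed_vals st idx) C z \<bind> (\<lambda>Sh. return_pmf (update_scores st idx Sh @ [(s, 1)]))))"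
    proof (rule gd_bind[OF gd_sigp])
      fix p z assume "z \<in> set_pmf (sigp K C p s ?k)"
      then have "C + ?k - K \<le> z \<and> z \<le> min ?k C" using sigp_feas[OF kle C] by blast
      then have "z \<le> num_pos (feed_vals st idx)" "C - z \<le> length (feed_vals st idx) - num_pos (feed_vals st idx)"
        using len C kle by auto
      then have "finite (set_pmf (share_pmf (feed_vals st idx) C z))" by (rule share_fin)
      then show "gd (Qc K) (\<lambda>p. share_pmf (feed_vals st idx) C z \<bind> (\<lambda>Sh. return_pmf (update_scores st idx Sh @ [(s, 1)])))"
        by (intro gd_const) simp
    qed
  qed
qed

lemma gd_hist:
  assumes C: "C \<le> K" and K: "1 \<le> K"
  shows "gd (Qc K) (\<lambda>p. hist_pmf q K C lam (sigp K C p) \<omega> m)"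
proof (induction m)
  case 0 then show ?case by (simp add: gd_const)
next
  case (Suc m)
  show ?case unfolding hist_pmf.simps
  proof (rule gd_bind[OF Suc.IH])
    fix p st assume "st \<in> set_pmf (hist_pmf q K C lam (sigp K C p) \<omega> m)"
    then have I: "length st = m" "\<forall>x\<in>set st. 1 \<le> snd x" using hist_inv by blast+
    show "gd (Qc K) (\<lambda>p. if m < K then map_pmf (\<lambda>s. st @ [(s, 1)]) (signal_pmf q \<omega>)
                else step_pmf q K C lam (sigp K C p) \<omega> st)"
    proof (cases "m < K")
      case True then show ?thesis using signal_fin by (simp add: gd_const)
    next
      case False
      then have "good_st st" using I K unfolding good_st_def by auto
      then show ?thesis using False gd_step[OF C] by simp
    qed
  qed
qed

lemma gd_obs:
  assumes C: "C \<le> K" and K: "1 \<le> K" and i: "K + 1 \<le> i"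
  shows "gd (Qc K) (\<lambda>p. obs_pmf q K C lam (sigp K C p) \<omega> i)"
  unfolding obs_pmf_def
proof (rule gd_bind[OF gd_hist[OF C K]])
  fix p st assume "st \<in> set_pmf (hist_pmf q K C lam (sigp K C p) \<omega> (i - 1))"
  then have I: "length st = i - 1" "\<forall>x\<in>set st. 1 \<le> snd x" using hist_inv by blast+
  then have g: "good_st st" using i K unfolding good_st_def by auto
  show "gd (Qc K) (\<lambda>p. feed_pmf lam K st \<bind> (\<lambda>idx. signal_pmf q \<omega> \<bind> (\<lambda>s. return_pmf (s, num_pos (feed_vals st idx)))))"
    by (rule gd_const) (use feed_fin[OF g] signal_fin in simp)
qed

lemma cont_joint:
  assumes C: "C \<le> K" and K: "1 \<le> K"
  shows "continuous_on (Qc K) (\<lambda>p. joint_prob n q K C lam (sigp K C p) \<omega> s k)"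
  unfolding joint_prob_def
  by (intro continuous_on_mult continuous_on_const continuous_on_sum)
     (use gd_obs[OF C K] in \<open>auto simp: gd_def\<close>)
lemma pmf_map_inj_on':
  assumes inj: "inj_on G D" and sub: "set_pmf M \<subseteq> D" and x: "x \<in> D"
  shows "pmf (map_pmf G M) (G x) = pmf M x"
proof (cases "x \<in> set_pmf M")
  case True
  then show ?thesis using pmf_map_inj[OF inj_on_subset[OF inj sub]] by blast
next
  case False
  have "G x \<notin> set_pmf (map_pmf G M)"
  proof
    assume "G x \<in> set_pmf (map_pmf G M)"
    then obtain y where y: "y \<in> set_pmf M" "G x = G y" by auto
    then have "x = y" using inj x sub by (meson inj_onD subsetD)
    then show False using False y by simp
  qed
  then have "pmf (map_pmf G M) (G x) = 0" by (simp add: pmf_eq_0_set_pmf del: set_map_pmf)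
  moreover have "pmf M x = 0" using False by (simp add: pmf_eq_0_set_pmf)
  ultimately show ?thesis by simp
qed

lemma signal_set: "set_pmf (signal_pmf q \<omega>) \<subseteq> {\<omega>, -\<omega>}"
  unfolding signal_pmf_def by auto

lemma obs_flip_eq:
  assumes sym: "symstrat K C \<sigma>" and om: "\<omega> \<in> {-1,1}" and K: "1 \<le> K" and i: "K + 1 \<le> i"
  shows "obs_pmf q K C lam \<sigma> (flipv \<omega>) i = map_pmf (\<lambda>(s,k). (flipv s, K - k)) (obs_pmf q K C lam \<sigma> \<omega> i)"
proof -
  have "obs_pmf q K C lam \<sigma> (flipv \<omega>) i = hist_pmf q K C lam \<sigma> \<omega> (i - 1) \<bind> (\<lambda>st.
     feed_pmf lam K (flipst st) \<bind> (\<lambda>idx. signal_pmf q (flipv \<omega>) \<bind> (\<lambda>s. return_pmf (s, num_pos (feed_vals (flipst st) idx)))))"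
    unfolding obs_pmf_def hist_flip[OF sym om K, symmetric] bind_map_pmf ..
  also have "\<dots> = hist_pmf q K C lam \<sigma> \<omega> (i - 1) \<bind> (\<lambda>st.
     feed_pmf lam K st \<bind> (\<lambda>idx. signal_pmf q \<omega> \<bind> (\<lambda>s. return_pmf ((\<lambda>(s,k). (flipv s, K - k)) (s, num_pos (feed_vals st idx))))))"
  proof (rule bind_pmf_cong[OF refl])
    fix st assume "st \<in> set_pmf (hist_pmf q K C lam \<sigma> \<omega> (i - 1))"
    then have I: "length st = i - 1" "\<forall>x\<in>set st. 1 \<le> snd x" using hist_inv by blast+
    then have g: "good_st st" using i K unfolding good_st_def by auto
    show "feed_pmf lam K (flipst st) \<bind> (\<lambda>idx. signal_pmf q (flipv \<omega>) \<bind> (\<lambda>s. return_pmf (s, num_pos (feed_vals (flipst st) idx)))) =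
      feed_pmf lam K st \<bind> (\<lambda>idx. signal_pmf q \<omega> \<bind> (\<lambda>s. return_pmf ((\<lambda>(s,k). (flipv s, K - k)) (s, num_pos (feed_vals st idx)))))"
      unfolding feed_flip
    proof (rule bind_pmf_cong[OF refl])
      fix idx assume idx: "idx \<in> set_pmf (feed_pmf lam K st)"
      have len: "length idx = K" and sub: "set idx \<subseteq> {..<length st}" using feed_set[OF g idx] by auto
      have fv: "feed_vals (flipst st) idx = map flipv (feed_vals st idx)" by (rule feed_vals_flip[OF sub])
      have lf: "length (feed_vals st idx) = K" using len by (simp add: feed_vals_def)
      show "signal_pmf q (flipv \<omega>) \<bind> (\<lambda>s. return_pmf (s, num_pos (feed_vals (flipst st) idx))) =
         signal_pmf q \<omega> \<bind> (\<lambda>s. return_pmf ((\<lambda>(s,k). (flipv s, K - k)) (s, num_pos (feed_vals st idx))))"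
        unfolding fv signal_flip[OF om] bind_map_pmf using num_pos_flip lf by simp
    qed
  qed
  also have "\<dots> = map_pmf (\<lambda>(s,k). (flipv s, K - k)) (obs_pmf q K C lam \<sigma> \<omega> i)"
    unfolding obs_pmf_def map_bind_pmf map_return_pmf ..
  finally show ?thesis .
qed

lemma obs_set:
  assumes om: "\<omega> \<in> {-1,1}" and K: "1 \<le> K" and i: "K + 1 \<le> i"
  shows "set_pmf (obs_pmf q K C lam \<sigma> \<omega> i) \<subseteq> {-1,1} \<times> {..K}"
proof
  fix x assume "x \<in> set_pmf (obs_pmf q K C lam \<sigma> \<omega> i)"
  then obtain st idx s where st: "st \<in> set_pmf (hist_pmf q K C lam \<sigma> \<omega> (i - 1))"
    and idx: "idx \<in> set_pmf (feed_pmf lam K st)" and s: "s \<in> set_pmf (signal_pmf q \<omega>)"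
    and x: "x = (s, num_pos (feed_vals st idx))"
    unfolding obs_pmf_def by auto
  have I: "length st = i - 1" "\<forall>x\<in>set st. 1 \<le> snd x" using hist_inv st by blast+
  then have g: "good_st st" using i K unfolding good_st_def by auto
  have "length (feed_vals st idx) = K" using feed_set(1)[OF g idx] by (simp add: feed_vals_def)
  then have "num_pos (feed_vals st idx) \<le> K" using num_pos_le by metis
  moreover have "s \<in> {-1,1}" using s signal_set[of q \<omega>] om by auto
  ultimately show "x \<in> {-1,1} \<times> {..K}" using x by auto
qed

lemma obs_flip:
  assumes sym: "symstrat K C \<sigma>" and om: "\<omega> \<in> {-1,1}" and K: "1 \<le> K" and i: "K + 1 \<le> i"
    and s: "s \<in> {-1,1}" and k: "k \<le> K"
  shows "pmf (obs_pmf q K C lam \<sigma> (flipv \<omega>) i) (s, k) = pmf (obs_pmf q K C lam \<sigma> \<omega> i) (flipv s, K - k)"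
proof -
  let ?G = "\<lambda>(s::int,k::nat). (flipv s, K - k)"
  have inj: "inj_on ?G ({-1,1} \<times> {..K})" by (auto simp: inj_on_def flipv_def)
  have xD: "(flipv s, K - k) \<in> {-1,1} \<times> {..K}" using s by (auto simp: flipv_def)
  have Gx: "?G (flipv s, K - k) = (s, k)" using s k by (auto simp: flipv_def)
  show ?thesis
    unfolding obs_flip_eq[OF sym om K i]
    using pmf_map_inj_on'[OF inj obs_set[OF om K i] xD] Gx by simp
qed

lemma joint_flip:
  assumes sym: "symstrat K C \<sigma>" and om: "\<omega> \<in> {-1,1}" and K: "1 \<le> K"
    and s: "s \<in> {-1,1}" and k: "k \<le> K"
  shows "joint_prob n q K C lam \<sigma> (flipv \<omega>) s k = joint_prob n q K C lam \<sigma> \<omega> (flipv s) (K - k)"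
  unfolding joint_prob_def
  by (rule arg_cong[where f = "\<lambda>x. 1 / 2 * (1 / real (n - K)) * x"], rule sum.cong[OF refl])
     (rule obs_flip[OF sym om K _ s k], auto)

definition beta :: "nat \<Rightarrow> real \<Rightarrow> nat \<Rightarrow> nat \<Rightarrow> real \<Rightarrow> (nat \<Rightarrow> real) \<Rightarrow> nat \<Rightarrow> real" where
  "beta n q K C lam p k = joint_prob n q K C lam (sigp K C p) 1 1 k - joint_prob n q K C lam (sigp K C p) (-1) 1 k"

definition Fmap :: "nat \<Rightarrow> real \<Rightarrow> nat \<Rightarrow> nat \<Rightarrow> real \<Rightarrow> (nat \<Rightarrow> real) \<Rightarrow> nat \<Rightarrow> real" where
  "Fmap n q K C lam p = (\<lambda>k. if k \<le> K then max 0 (min 1 (p k + beta n q K C lam p k)) else 0)"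

lemma exists_fp:
  assumes C: "C \<le> K" and K: "1 \<le> K"
  shows "\<exists>p\<in>Qc K. Fmap n q K C lam p = p"
proof (rule brouwer_cube)
  have cb: "continuous_on (Qc K) (\<lambda>p. beta n q K C lam p k)" for k
    unfolding beta_def by (intro continuous_on_diff cont_joint[OF C K])
  have ck: "continuous_on (Qc K) (\<lambda>p. p k)" for k
    by (rule continuous_on_subset[OF continuous_on_product_coordinates]) auto
  show "continuous_on (Qc K) (Fmap n q K C lam)" unfolding Fmap_def
  proof (rule continuous_on_coordinatewise_then_product)
    fix k show "continuous_on (Qc K) (\<lambda>p. if k \<le> K then max 0 (min 1 (p k + beta n q K C lam p k)) else 0)"
      by (cases "k \<le> K") (simp_all add: continuous_on_max continuous_on_min continuous_on_add continuous_on_const cb ck)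
  qed
  show "Fmap n q K C lam ` Qc K \<subseteq> Qc K" unfolding Fmap_def Qc_def by auto
qed

lemma sum_sig1:
  assumes "0 \<le> p k" "p k \<le> 1" "k \<le> K" "C \<le> K"
  shows "(\<Sum>z\<le>C. pmf (sig1 K C p k) z * h z) = p k * h (min k C) + (1 - p k) * h (C + k - K)"
proof -
  have "(\<Sum>z\<le>C. pmf (sig1 K C p k) z * h z) = (\<integral>z. h z \<partial>measure_pmf (sig1 K C p k))"
    by (subst integral_measure_pmf[of "{..C}"]) (use sig1_set[of K C p k] assms in auto)
  then show ?thesis using assms unfolding sig1_def by simp
qed

lemma exp_util_eq:
  "exp_util n q K C lam u \<sigma> s k z = u * (joint_prob n q K C lam \<sigma> (-1) s k * real (C - z) + joint_prob n q K C lam \<sigma> 1 s k * real z)"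
  unfolding exp_util_def share_utility_def by (simp add: algebra_simps)

lemma br1:
  assumes pQ: "p \<in> Qc K" and fp: "Fmap n q K C lam p = p" and k: "k \<le> K" and C: "C \<le> K" and u: "0 < u"
    and z1: "C + k - K \<le> z" and z2: "z \<le> min k C"
  shows "(\<Sum>z'\<le>C. pmf (sig1 K C p k) z' * exp_util n q K C lam u (sigp K C p) 1 k z') \<ge> exp_util n q K C lam u (sigp K C p) 1 k z"
proof -
  define a where "a = joint_prob n q K C lam (sigp K C p) (-1) 1 k"
  define b where "b = joint_prob n q K C lam (sigp K C p) 1 1 k"
  define \<beta> where "\<beta> = beta n q K C lam p k"
  have \<beta>: "\<beta> = b - a" unfolding \<beta>_def beta_def a_def b_def ..
  let ?EU = "exp_util n q K C lam u (sigp K C p) 1 k"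
  have EU: "?EU y = u * (a * (real C - real y) + b * real y)" if "y \<le> C" for y
    unfolding exp_util_eq a_def b_def using that by (simp add: of_nat_diff)
  define hi where "hi = min k C"
  define lo where "lo = C + k - K"
  have hiC: "hi \<le> C" and loC: "lo \<le> C" and zC: "z \<le> C" using k z2 unfolding hi_def lo_def by auto
  have p01: "0 \<le> p k" "p k \<le> 1" using pQ k unfolding Qc_def by auto
  have fpk: "p k = max 0 (min 1 (p k + \<beta>))" using fun_cong[OF fp, of k] k unfolding Fmap_def \<beta>_def by simp
  have sum: "(\<Sum>z'\<le>C. pmf (sig1 K C p k) z' * ?EU z') = p k * ?EU hi + (1 - p k) * ?EU lo"
    unfolding hi_def lo_def by (rule sum_sig1[of p k K C, OF p01 k C])
  have diff: "p k * ?EU hi + (1 - p k) * ?EU lo - ?EU z = u * \<beta> * (p k * real hi + (1 - p k) * real lo - real z)"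
    unfolding EU[OF hiC] EU[OF loC] EU[OF zC] \<beta> by (simp add: algebra_simps)
  have "u * \<beta> * (p k * real hi + (1 - p k) * real lo - real z) \<ge> 0"
  proof (cases "\<beta> > 0")
    case True
    then have "p k = 1" using fpk p01 by (smt (verit))
    moreover have "real z \<le> real hi" using z2 unfolding hi_def by simp
    ultimately show ?thesis using True u by simp
  next
    case False
    show ?thesis
    proof (cases "\<beta> < 0")
      case True
      then have "p k = 0" using fpk p01 by (smt (verit))
      moreover have "real lo \<le> real z" using z1 unfolding lo_def by simp
      ultimately show ?thesis using True u by (simp add: mult_nonpos_nonpos mult_nonneg_nonpos)
    next
      case False2: False
      then have "\<beta> = 0" using False by simp
      then show ?thesis by simp
    qed
  qed
  then show ?thesis using sum diff by simp
qed
lemma EU_flip: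
  assumes C: "C \<le> K" and K: "1 \<le> K" and k: "k \<le> K" and z: "z \<le> C"
  shows "exp_util n q K C lam u (sigp K C p) (-1) k z = exp_util n q K C lam u (sigp K C p) 1 (K - k) (C - z)"
proof -
  note sym = sigp_symstrat[OF C, of p]
  have j1: "joint_prob n q K C lam (sigp K C p) (-1) (-1) k = joint_prob n q K C lam (sigp K C p) 1 1 (K - k)"
    using joint_flip[OF sym, of 1 "-1" k n q lam] K k by (simp add: flipv_def)
  have j2: "joint_prob n q K C lam (sigp K C p) 1 (-1) k = joint_prob n q K C lam (sigp K C p) (-1) 1 (K - k)"
    using joint_flip[OF sym, of "-1" "-1" k n q lam] K k by (simp add: flipv_def)
  show ?thesis unfolding exp_util_eq j1 j2 using z by (simp add: algebra_simps)
qed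

lemma sum_reflect: "(\<Sum>z\<le>C. f z) = (\<Sum>y\<le>(C::nat). f (C - y))"
  by (rule sum.reindex_bij_witness[of _ "\<lambda>y. C - y" "\<lambda>y. C - y"]) auto

lemma pmf_reflect:
  assumes "set_pmf M \<subseteq> {..(C::nat)}" "z \<le> C"
  shows "pmf (map_pmf (\<lambda>z. C - z) M) (C - z) = pmf M z"
proof -
  have inj: "inj_on (\<lambda>z. C - z) {..C}" unfolding inj_on_def
  proof (intro ballI impI)
    fix x y assume "x \<in> {..C}" "y \<in> {..C}" "C - x = C - y"
    then have "x \<le> C" "y \<le> C" "C - x = C - y" by auto
    then show "x = y" by arith
  qed
  show ?thesis by (rule pmf_map_inj_on'[OF inj assms(1)]) (use assms in auto)
qed

lemma bne:
  assumes pQ: "p \<in> Qc K" and fp: "Fmap n q K C lam p = p" and C: "C \<le> K" and K: "1 \<le> K" and u: "0 < u"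
  shows "symmetric_BNE n q K C lam u (sigp K C p)"
  unfolding symmetric_BNE_def
proof (intro conjI)
  show "valid_strategy K C (sigp K C p)"
    unfolding valid_strategy_def feasible_def using sigp_feas[OF _ C] by fastforce
  show "state_symmetric K C (sigp K C p)"
    unfolding state_symmetric_def
  proof (intro ballI allI impI)
    fix s k z assume s: "s \<in> {-1, 1::int}" and k: "k \<le> K" and z: "z \<le> C"
    have h: "sigp K C p (flipv s) (K - k) = map_pmf (\<lambda>z. C - z) (sigp K C p s k)"
      using sigp_symstrat[OF C, of p] k unfolding symstrat_def by (simp only:)
    have "flipv s = - s" using s by (auto simp: flipv_def)
    then have "sigp K C p (- s) (K - k) = map_pmf (\<lambda>z. C - z) (sigp K C p s k)" using h by simp
    then show "pmf (sigp K C p s k) z = pmf (sigp K C p (- s) (K - k)) (C - z)"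
      using pmf_reflect[OF sigp_le[OF C k] z] by simp
  qed
  show "\<forall>s\<in>{-1, 1}. \<forall>k\<le>K. \<forall>z\<in>feasible K C k.
     exp_util n q K C lam u (sigp K C p) s k z \<le> (\<Sum>z'\<le>C. pmf (sigp K C p s k) z' * exp_util n q K C lam u (sigp K C p) s k z')"
  proof (intro ballI allI impI)
    fix s k z assume s: "s \<in> {-1, 1::int}" and k: "k \<le> K" and z: "z \<in> feasible K C k"
    have z1: "C + k - K \<le> z" and z2: "z \<le> min k C" using z unfolding feasible_def by auto
    show "exp_util n q K C lam u (sigp K C p) s k z \<le> (\<Sum>z'\<le>C. pmf (sigp K C p s k) z' * exp_util n q K C lam u (sigp K C p) s k z')"
    proof (cases "s = 1")
      case True
      then show ?thesis using br1[OF pQ fp k C u z1 z2] by (simp add: sigp_def)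
    next
      case False
      then have sm: "s = -1" using s by auto
      let ?S = "sig1 K C p (K - k)"
      have Sset: "set_pmf ?S \<subseteq> {..C}" using sigp_le[OF C, of "K - k" p 1] by (simp add: sigp_def)
      have "(\<Sum>z'\<le>C. pmf (sigp K C p s k) z' * exp_util n q K C lam u (sigp K C p) s k z')
          = (\<Sum>y\<le>C. pmf (map_pmf (\<lambda>z. C - z) ?S) (C - y) * exp_util n q K C lam u (sigp K C p) (-1) k (C - y))"
        unfolding sm by (subst sum_reflect) (simp add: sigp_def)
      also have "\<dots> = (\<Sum>y\<le>C. pmf ?S y * exp_util n q K C lam u (sigp K C p) 1 (K - k) y)"
        by (rule sum.cong[OF refl]) (simp add: pmf_reflect[OF Sset] EU_flip[OF C K k])
      also have "\<dots> \<ge> exp_util n q K C lam u (sigp K C p) 1 (K - k) (C - z)"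
        by (rule br1[OF pQ fp _ C u]) (use k z1 z2 in auto)
      finally show ?thesis unfolding sm using EU_flip[OF C K k] z2 by simp
    qed
  qed
qed

lemma subseq_all:
  fixes x :: "nat \<Rightarrow> nat \<Rightarrow> real" and N :: nat
  assumes b: "\<And>j i. x j i \<in> {0..1::real}"
  shows "\<exists>r L. strict_mono r \<and> (\<forall>i<N. L i \<in> {0..1} \<and> (\<lambda>j. x (r j) i) \<longlonglongrightarrow> L i)"
proof (induction N)
  case 0
  show ?case by (rule exI[of _ id]) (auto simp: strict_mono_def)
next
  case (Suc N)
  then obtain r L where r: "strict_mono r" and L: "\<forall>i<N. L i \<in> {0..1} \<and> (\<lambda>j. x (r j) i) \<longlonglongrightarrow> L i" by blast
  have sc: "seq_compact {0..1::real}" by (rule compact_imp_seq_compact) simp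
  have bN: "\<forall>n. (\<lambda>j. x (r j) N) n \<in> {0..1}" using b by simp
  obtain l r2 where l: "l \<in> {0..1}" and r2: "strict_mono r2" and lim: "((\<lambda>j. x (r j) N) \<circ> r2) \<longlonglongrightarrow> l"
    by (rule seq_compactE[OF sc bN])
  define L' where "L' = L(N := l)"
  have "\<forall>i<Suc N. L' i \<in> {0..1} \<and> (\<lambda>j. x ((r \<circ> r2) j) i) \<longlonglongrightarrow> L' i"
  proof (intro allI impI)
    fix i assume i: "i < Suc N"
    show "L' i \<in> {0..1} \<and> (\<lambda>j. x ((r \<circ> r2) j) i) \<longlonglongrightarrow> L' i"
    proof (cases "i = N")
      case True then show ?thesis using l lim unfolding L'_def by (simp add: o_def)
    next
      case False
      then have "i < N" using i by simp
      then have "L i \<in> {0..1}" "(\<lambda>j. x (r j) i) \<longlonglongrightarrow> L i" using L by auto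
      moreover have "((\<lambda>j. x (r j) i) \<circ> r2) \<longlonglongrightarrow> L i" using LIMSEQ_subseq_LIMSEQ[OF calculation(2) r2] .
      ultimately show ?thesis using False unfolding L'_def by (simp add: o_def)
    qed
  qed
  then show ?case using strict_mono_o[OF r r2] by (intro exI[of _ "r \<circ> r2"] exI[of _ L'] conjI)
qed

lemma measure_bool:
  fixes A :: "bool set"
  shows "measure (measure_pmf B) A = (if True \<in> A then pmf B True else 0) + (if False \<in> A then pmf B False else 0)"
proof -
  have "measure (measure_pmf B) A = sum (pmf B) A"
    by (rule measure_measure_pmf_finite) simp
  also have "\<dots> = sum (pmf B) (UNIV \<inter> A)" by simp
  also have "\<dots> = (\<Sum>x\<in>UNIV. if x \<in> A then pmf B x else 0)"
    by (rule sum.inter_restrict) simp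
  also have "\<dots> = (if True \<in> A then pmf B True else 0) + (if False \<in> A then pmf B False else 0)"
    by (simp add: UNIV_bool)
  finally show ?thesis .
qed

lemma pmf_sig1:
  assumes "0 \<le> p k" "p k \<le> 1"
  shows "pmf (sig1 K C p k) z = (if z = min k C then p k else 0) + (if z = C + k - K then 1 - p k else 0)"
proof -
  let ?g = "\<lambda>b. if b then min k C else C + k - K"
  have "pmf (sig1 K C p k) z = measure (measure_pmf (bernoulli_pmf (p k))) (?g -` {z})"
    unfolding sig1_def pmf_map ..
  also have "\<dots> = (if True \<in> ?g -` {z} then pmf (bernoulli_pmf (p k)) True else 0) + (if False \<in> ?g -` {z} then pmf (bernoulli_pmf (p k)) False else 0)"
    by (rule measure_bool)
  finally show ?thesis using assms by simp
qed

lemma sigp_valid: "C \<le> K \<Longrightarrow> valid_strategy K C (sigp K C p)"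
  unfolding valid_strategy_def feasible_def using sigp_feas[of _ K C] by fastforce

lemma sig1_conv:
  assumes P: "\<And>j. P j \<in> Qc K" and L: "L \<in> Qc K" and k: "k \<le> K" and lim: "(\<lambda>j. P j k) \<longlonglongrightarrow> L k"
  shows "(\<lambda>j. pmf (sig1 K C (P j) k) z) \<longlonglongrightarrow> pmf (sig1 K C L k) z"
proof -
  have p01: "0 \<le> P j k" "P j k \<le> 1" for j using P[of j] k unfolding Qc_def by auto
  have l01: "0 \<le> L k" "L k \<le> 1" using L k unfolding Qc_def by auto
  have "(\<lambda>j. (if z = min k C then P j k else 0) + (if z = C + k - K then 1 - P j k else 0))
        \<longlonglongrightarrow> (if z = min k C then L k else 0) + (if z = C + k - K then 1 - L k else 0)"
    by (cases "z = min k C"; cases "z = C + k - K") (auto intro!: tendsto_intros lim)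
  then show ?thesis using pmf_sig1[of "P _" k, OF p01] pmf_sig1[of L k, OF l01] by simp
qed

lemma sigp_conv:
  assumes C: "C \<le> K" and k: "k \<le> K" and z: "z \<le> C" and s: "s \<in> {-1,1}"
    and P: "\<And>j. P j \<in> Qc K" and L: "L \<in> Qc K" and lim: "\<And>i. i \<le> K \<Longrightarrow> (\<lambda>j. P j i) \<longlonglongrightarrow> L i"
  shows "(\<lambda>j. pmf (sigp K C (P j) s k) z) \<longlonglongrightarrow> pmf (sigp K C L s k) z"
proof (cases "s = 1")
  case True
  then show ?thesis using sig1_conv[OF P L k lim[OF k]] by (simp add: sigp_def)
next
  case False
  have Kk: "K - k \<le> K" by simp
  have e: "pmf (sigp K C p s k) z = pmf (sig1 K C p (K - k)) (C - z)" for p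
  proof -
    have S: "set_pmf (sig1 K C p (K - k)) \<subseteq> {..C}" using sigp_le[OF C Kk, of p 1] by (simp add: sigp_def)
    have "pmf (map_pmf (\<lambda>z. C - z) (sig1 K C p (K - k))) (C - (C - z)) = pmf (sig1 K C p (K - k)) (C - z)"
      by (rule pmf_reflect[OF S]) simp
    then show ?thesis using False z by (simp add: sigp_def)
  qed
  show ?thesis unfolding e using sig1_conv[OF P L Kk lim[OF Kk]] .
qed

theorem proposition1:
  fixes q lam u :: real and K C :: nat
  assumes "1/2 < q" "q < 1" "1 \<le> K" "1 \<le> C" "2 * C \<le> K" "0 \<le> lam" "lam \<le> 1" "0 < u"
  shows "(\<forall>n::nat. \<exists>\<sigma>. symmetric_BNE n q K C lam u \<sigma>) \<and>
         (\<exists>\<sigma>. limit_equilibrium q K C lam u \<sigma>)"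
proof
  have C: "C \<le> K" using assms(5) by simp
  have K: "1 \<le> K" by (rule assms(3))
  have u: "0 < u" by (rule assms(8))
  have ex: "\<forall>n. \<exists>p. p \<in> Qc K \<and> Fmap n q K C lam p = p" using exists_fp[OF C K] by blast
  show "\<forall>n::nat. \<exists>\<sigma>. symmetric_BNE n q K C lam u \<sigma>"
    using ex bne[OF _ _ C K u] by blast
  obtain P where P: "\<And>n. P n \<in> Qc K" "\<And>n. Fmap n q K C lam (P n) = P n" using ex by metis
  have b: "P j i \<in> {0..1}" for j i using P(1)[of j] unfolding Qc_def by (cases "i \<le> K") auto
  obtain r L where r: "strict_mono r" and L: "\<forall>i<Suc K. L i \<in> {0..1} \<and> (\<lambda>j. P (r j) i) \<longlonglongrightarrow> L i"
    using subseq_all[of P "Suc K", OF b] by blast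
  define L' where "L' = (\<lambda>i. if i \<le> K then L i else 0)"
  have L'Q: "L' \<in> Qc K" using L unfolding L'_def Qc_def by auto
  have limL: "(\<lambda>j. P (r j) i) \<longlonglongrightarrow> L' i" if "i \<le> K" for i using L that unfolding L'_def by auto
  show "\<exists>\<sigma>. limit_equilibrium q K C lam u \<sigma>"
    unfolding limit_equilibrium_def
  proof (intro exI conjI)
    show "valid_strategy K C (sigp K C L')" by (rule sigp_valid[OF C])
    show "filterlim r at_top sequentially" by (rule filterlim_subseq[OF r])
    show "\<forall>j. symmetric_BNE (r j) q K C lam u (sigp K C (P (r j)))"
      using bne[OF P(1) P(2) C K u] by blast
    show "\<forall>s\<in>{-1, 1}. \<forall>k\<le>K. \<forall>z\<le>C. (\<lambda>j. pmf (sigp K C (P (r j)) s k) z) \<longlonglongrightarrow> pmf (sigp K C L' s k) z"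
      using sigp_conv[OF C _ _ _ P(1) L'Q limL] by blast
  qed
qed

end
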